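(* Let $(X,\rho)$ be a metric space and let $f,g$ be unbounded moduli. Then for all $A,B\in CL(X)$ and every sequence $(A_k)\subset CL(X)$, if $(A_k)$ is $f$-Wijsman statistically convergent to $A$ and $g$-Wijsman statistically convergent to $B$, then $A=B$.
   Context: A modulus is a function $f\colon[0,\infty)\to[0,\infty)$ such that $f(x)=0$ iff $x=0$, $f$ is subadditive, increasing and continuous. $CL(X)$ denotes the set of all non-empty closed subsets of $(X,\rho)$, and $d(x,B)=\inf_{y\in B}\rho(x,y)$. For an unbounded modulus $f$ and $K\subseteq\mathbb N$, the $f$-density is $d^f(K)=\lim_{n\to\infty}\frac{f(|\{k\le n:k\in K\}|)}{f(n)}$ (when the limit exists). A real sequence $(x_k)$ is $f$-statistically convergent to $l$ if for every $\varepsilon>0$ the set $\{k:|x_k-l|\ge\varepsilon\}$ has $f$-density $0$. $(A_k)\subset CL(X)$ is $f$-Wijsman statistically convergent to $A\in CL(X)$ if for every $x\in X$ the sequence $(d(x,A_k))$ is $f$-statistically convergent to $d(x,A)$. *)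

theory Defs
  imports "HOL-Analysis.Analysis"
begin

definition modulus :: "(real \<Rightarrow> real) \<Rightarrow> bool" where
  "modulus f \<longleftrightarrow>
     (\<forall>x\<ge>0. f x \<ge> 0) \<and>
     (\<forall>x\<ge>0. f x = 0 \<longleftrightarrow> x = 0) \<and>
     (\<forall>x\<ge>0. \<forall>y\<ge>0. f (x + y) \<le> f x + f y) \<and>
     mono_on {0..} f \<and>
     continuous_on {0..} f"

definition unbounded_modulus :: "(real \<Rightarrow> real) \<Rightarrow> bool" where
  "unbounded_modulus f \<longleftrightarrow> modulus f \<and> \<not> bdd_above (f ` {0..})"

text \<open>The f-density of K is 0 (the limit exists and equals 0).
  Sequences are indexed by nat; counting uses indices 1..n as in the paper.\<close>
definition f_density_zero :: "(real \<Rightarrow> real) \<Rightarrow> nat set \<Rightarrow> bool" where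
  "f_density_zero f K \<longleftrightarrow>
     ((\<lambda>n. f (real (card {k \<in> {1..n}. k \<in> K})) / f (real n)) \<longlonglongrightarrow> 0)"

definition f_stat_conv :: "(real \<Rightarrow> real) \<Rightarrow> (nat \<Rightarrow> real) \<Rightarrow> real \<Rightarrow> bool" where
  "f_stat_conv f x l \<longleftrightarrow>
     (\<forall>\<epsilon>>0. f_density_zero f {k. \<bar>x k - l\<bar> \<ge> \<epsilon>})"

definition CL :: "'a::metric_space set set" where
  "CL = {A. A \<noteq> {} \<and> closed A}"

definition f_wijsman_stat_conv ::
    "(real \<Rightarrow> real) \<Rightarrow> (nat \<Rightarrow> 'a::metric_space set) \<Rightarrow> 'a set \<Rightarrow> bool" where
  "f_wijsman_stat_conv f As A \<longleftrightarrow>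
     (\<forall>x. f_stat_conv f (\<lambda>k. infdist x (As k)) (infdist x A))"

end

theory Submission
  imports Defs
begin

lemma half_bound:
  assumes m: "modulus f" and n: "n \<ge> 1" and c: "n \<le> 2 * c"
  shows "f (real c) / f (real n) \<ge> 1/2"
proof -
  have nn: "\<forall>x\<ge>0. f x \<ge> 0" and z: "\<forall>x\<ge>0. f x = 0 \<longleftrightarrow> x = 0"
    and sa: "\<forall>x\<ge>0. \<forall>y\<ge>0. f (x + y) \<le> f x + f y" and mo: "mono_on {0..} f"
    using m unfolding modulus_def by auto
  have rn: "real n > 0" using n by simp
  have fpos: "f (real n) > 0"
  proof -
    have "f (real n) \<ge> 0" using nn rn by simp
    moreover have "f (real n) \<noteq> 0" using z rn by simp
    ultimately show ?thesis by simp
  qed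
  have "f (real n) \<le> f (real c + real c)"
    using mo c by (intro mono_onD[OF mo]) auto
  also have "\<dots> \<le> f (real c) + f (real c)" using sa of_nat_0_le_iff by blast
  also have "\<dots> = 2 * f (real c)" by simp
  finally show ?thesis using fpos by (simp add: field_simps)
qed

lemma dens_small:
  assumes m: "modulus f" and d: "f_density_zero f K"
  shows "eventually (\<lambda>n. 2 * card {k \<in> {1..n}. k \<in> K} < n) sequentially"
proof -
  have "eventually (\<lambda>n. f (real (card {k \<in> {1..n}. k \<in> K})) / f (real n) < 1/2) sequentially"
    using d unfolding f_density_zero_def by (intro order_tendstoD) auto
  moreover have "eventually (\<lambda>n. n \<ge> 1) sequentially" by (rule eventually_ge_at_top)
  ultimately show ?thesis
  proof eventually_elim
    case (elim n)
    show ?case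
    proof (rule ccontr)
      assume "\<not> ?case"
      then have "n \<le> 2 * card {k \<in> {1..n}. k \<in> K}" by simp
      from half_bound[OF m elim(2) this] elim(1) show False by simp
    qed
  qed
qed

lemma dist_eq:
  assumes "unbounded_modulus f" and "unbounded_modulus g"
    and "f_stat_conv f u a" and "f_stat_conv g u b"
  shows "a = b"
proof (rule ccontr)
  assume ne: "a \<noteq> b"
  define e where "e = \<bar>a - b\<bar> / 2"
  have e: "e > 0" using ne by (simp add: e_def)
  define K where "K = {k. \<bar>u k - a\<bar> \<ge> e}"
  define L where "L = {k. \<bar>u k - b\<bar> \<ge> e}"
  have mf: "modulus f" and mg: "modulus g" using assms unfolding unbounded_modulus_def by auto
  have dK: "f_density_zero f K" using assms(3) e unfolding f_stat_conv_def K_def by auto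
  have dL: "f_density_zero g L" using assms(4) e unfolding f_stat_conv_def L_def by auto
  have all: "\<And>k. k \<in> K \<or> k \<in> L"
  proof -
    fix k
    have "\<bar>a - b\<bar> \<le> \<bar>u k - a\<bar> + \<bar>u k - b\<bar>"
      using abs_triangle_ineq[of "a - u k" "u k - b"] abs_minus_commute[of a "u k"] by simp
    then have "\<bar>u k - a\<bar> \<ge> e \<or> \<bar>u k - b\<bar> \<ge> e" unfolding e_def
      by (cases "\<bar>a - b\<bar> / 2 \<le> \<bar>u k - a\<bar>") auto
    then show "k \<in> K \<or> k \<in> L" unfolding K_def L_def by simp
  qed
  obtain n where h1: "2 * card {k \<in> {1..n}. k \<in> K} < n"
      and h2: "2 * card {k \<in> {1..n}. k \<in> L} < n"
  proof -
    from eventually_conj[OF dens_small[OF mf dK] dens_small[OF mg dL]]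
    obtain N where "\<forall>n\<ge>N. 2 * card {k \<in> {1..n}. k \<in> K} < n \<and> 2 * card {k \<in> {1..n}. k \<in> L} < n"
      unfolding eventually_sequentially by blast
    then show ?thesis using that by blast
  qed
  have "{1..n} \<subseteq> {k \<in> {1..n}. k \<in> K} \<union> {k \<in> {1..n}. k \<in> L}" using all by auto
  hence "card {1..n} \<le> card ({k \<in> {1..n}. k \<in> K} \<union> {k \<in> {1..n}. k \<in> L})"
    by (intro card_mono) auto
  also have "\<dots> \<le> card {k \<in> {1..n}. k \<in> K} + card {k \<in> {1..n}. k \<in> L}"
    by (rule card_Un_le)
  finally show False using h1 h2 by simp
qed

theorem theorem2p3:
  fixes f g :: "real \<Rightarrow> real"
    and As :: "nat \<Rightarrow> 'a::metric_space set"
    and A B :: "'a set"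
  assumes "unbounded_modulus f" and "unbounded_modulus g"
    and "A \<in> CL" and "B \<in> CL" and "\<forall>k. As k \<in> CL"
    and "f_wijsman_stat_conv f As A"
    and "f_wijsman_stat_conv g As B"
  shows "A = B"
proof -
  have eq: "\<And>x. infdist x A = infdist x B"
    using dist_eq[OF assms(1,2)] assms(6,7) unfolding f_wijsman_stat_conv_def by blast
  have cA: "closed A" "A \<noteq> {}" and cB: "closed B" "B \<noteq> {}" using assms(3,4) unfolding CL_def by auto
  show ?thesis
  proof (rule set_eqI)
    fix x
    show "x \<in> A \<longleftrightarrow> x \<in> B"
      using in_closed_iff_infdist_zero[OF cA] in_closed_iff_infdist_zero[OF cB] eq by metis
  qed
qed

end
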